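(* Let $A$ be a finite subset of an abelian group. Then $$\mathsf{E}(A+A)\geq |A-A|^{-1}\,|A\times A+\Delta(A)|^2\geq |A|^2\max\{|A-A|,|A+A|\},$$ $$\mathsf{E}(A-A)\geq |A-A|^{-1}\,|A\times A-\Delta(A)|^2\geq |A|^2|A-A|,$$ and $$\mathsf{E}(A\pm A)\geq \frac{|A|^{12}}{\mathsf{E}_3(A)^2\,|A-A|},$$ the last inequality holding both for $A+A$ and for $A-A$.
   Context: For a finite set $X$ in an abelian group (written additively), $\mathsf{E}(X)$ is the additive energy, the number of solutions of $x_1-x_2=x_3-x_4$ with $x_i\in X$. For $y$ in the group let $r_{A-A}(y)=|\{(a,b)\in A\times A:a-b=y\}|$ and $\mathsf{E}_3(A)=\sum_y r_{A-A}(y)^3$. $A\pm A=\{a\pm b: a,b\in A\}$. $\Delta(A)=\{(a,a):a\in A\}$, $A\times A+\Delta(A)=\{(a_1+a,a_2+a):a,a_1,a_2\in A\}$ and $A\times A-\Delta(A)=\{(a_1-a,a_2-a):a,a_1,a_2\in A\}$. *)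

theory Defs
  imports "HOL-Analysis.Analysis"
begin

definition sumset :: "'a::ab_group_add set \<Rightarrow> 'a set \<Rightarrow> 'a set" where
  "sumset A B = {a + b | a b. a \<in> A \<and> b \<in> B}"

definition diffset :: "'a::ab_group_add set \<Rightarrow> 'a set \<Rightarrow> 'a set" where
  "diffset A B = {a - b | a b. a \<in> A \<and> b \<in> B}"

definition add_energy :: "'a::ab_group_add set \<Rightarrow> nat" where
  "add_energy X = card {(x1, x2, x3, x4). x1 \<in> X \<and> x2 \<in> X \<and> x3 \<in> X \<and> x4 \<in> X \<and> x1 - x2 = x3 - x4}"

definition r_diff :: "'a::ab_group_add set \<Rightarrow> 'a \<Rightarrow> nat" where
  "r_diff A y = card {(a, b). a \<in> A \<and> b \<in> A \<and> a - b = y}"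

text \<open>E_3(A) = sum over y of r_{A-A}(y)^3; terms vanish outside A-A.\<close>
definition E3 :: "'a::ab_group_add set \<Rightarrow> nat" where
  "E3 A = (\<Sum>y\<in>diffset A A. r_diff A y ^ 3)"

definition AxA_plus_Delta :: "'a::ab_group_add set \<Rightarrow> ('a \<times> 'a) set" where
  "AxA_plus_Delta A = {(a1 + a, a2 + a) | a a1 a2. a \<in> A \<and> a1 \<in> A \<and> a2 \<in> A}"

definition AxA_minus_Delta :: "'a::ab_group_add set \<Rightarrow> ('a \<times> 'a) set" where
  "AxA_minus_Delta A = {(a1 - a, a2 - a) | a a1 a2. a \<in> A \<and> a1 \<in> A \<and> a2 \<in> A}"

end

theory Submission
  imports Defs
begin

lemma fib_sum:
  assumes "finite X"
  shows "(\<Sum>d\<in>g`X. card {x\<in>X. g x = d}) = card X"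
  using sum.image_gen[OF assms, of "\<lambda>_. 1::nat" g] by simp

lemma pair_count:
  assumes "finite X"
  shows "card {(x,y). x\<in>X \<and> y\<in>X \<and> g x = g y} = (\<Sum>d\<in>g`X. (card {x\<in>X. g x = d})^2)"
proof -
  have eq: "{(x,y). x\<in>X \<and> y\<in>X \<and> g x = g y} = (\<Union>d\<in>g`X. {x\<in>X. g x = d} \<times> {x\<in>X. g x = d})"
    by auto
  show ?thesis unfolding eq
    by (subst card_UN_disjoint) (use assms in \<open>auto simp: power2_eq_square card_cartesian_product\<close>)
qed

lemma triple_count:
  assumes "finite X"
  shows "card {(x,y,z). x\<in>X \<and> y\<in>X \<and> z\<in>X \<and> g x = g y \<and> g y = g z} = (\<Sum>d\<in>g`X. (card {x\<in>X. g x = d})^3)"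
proof -
  have eq: "{(x,y,z). x\<in>X \<and> y\<in>X \<and> z\<in>X \<and> g x = g y \<and> g y = g z} = (\<Union>d\<in>g`X. {x\<in>X. g x = d} \<times> {x\<in>X. g x = d} \<times> {x\<in>X. g x = d})"
    by auto
  show ?thesis unfolding eq
    by (subst card_UN_disjoint) (use assms in \<open>auto simp: power3_eq_cube card_cartesian_product mult.assoc\<close>)
qed

lemma cs_fib:
  assumes "finite X"
  shows "real (card X)^2 \<le> real (card (g`X)) * real (card {(x,y). x\<in>X \<and> y\<in>X \<and> g x = g y})"
proof -
  have "real (card X)^2 = (\<Sum>d\<in>g`X. real (card {x\<in>X. g x = d}))^2"
    using fib_sum[OF assms, of g] by (metis of_nat_sum)
  also have "\<dots> \<le> (\<Sum>d\<in>g`X. (real (card {x\<in>X. g x = d}))^2) * card (g`X)"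
    by (rule sum_squared_le_sum_of_squares)
  also have "(\<Sum>d\<in>g`X. (real (card {x\<in>X. g x = d}))^2) = real (card {(x,y). x\<in>X \<and> y\<in>X \<and> g x = g y})"
    using pair_count[OF assms, of g] by simp
  finally show ?thesis by (simp add: mult.commute)
qed

lemma energy_bound:
  fixes S :: "'a::ab_group_add set"
  assumes S: "finite S" and P: "P \<subseteq> S \<times> S" and D: "finite D" "(\<lambda>(s,t). s - t) ` P \<subseteq> D"
  shows "real (card P)^2 / real (card D) \<le> real (add_energy S)"
proof (cases "P = {}")
  case True then show ?thesis by simp
next
  case False
  let ?g = "\<lambda>(s,t). s - t :: 'a"
  have fP: "finite P" using P S finite_subset by blast
  let ?W = "{(x,y). x\<in>P \<and> y\<in>P \<and> ?g x = ?g y}"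
  have "card ?W \<le> add_energy S"
    unfolding add_energy_def
  proof (rule card_inj_on_le[where f = "\<lambda>((s,t),(u,v)). (s,t,u,v)"])
    show "inj_on (\<lambda>((s,t),(u,v)). (s,t,u,v)) ?W" by (auto simp: inj_on_def)
    show "(\<lambda>((s,t),(u,v)). (s,t,u,v)) ` ?W \<subseteq> {(x1, x2, x3, x4). x1 \<in> S \<and> x2 \<in> S \<and> x3 \<in> S \<and> x4 \<in> S \<and> x1 - x2 = x3 - x4}"
      using P by auto
    have "{(x1, x2, x3, x4). x1 \<in> S \<and> x2 \<in> S \<and> x3 \<in> S \<and> x4 \<in> S \<and> x1 - x2 = x3 - x4} \<subseteq> S \<times> S \<times> S \<times> S" by auto
    then show "finite {(x1, x2, x3, x4). x1 \<in> S \<and> x2 \<in> S \<and> x3 \<in> S \<and> x4 \<in> S \<and> x1 - x2 = x3 - x4}"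
      using S finite_subset by blast
  qed
  have cs: "real (card P)^2 \<le> real (card (?g`P)) * real (card ?W)" by (rule cs_fib[OF fP])
  have pos: "card (?g`P) > 0" using False fP by (simp add: card_gt_0_iff)
  have le: "card (?g`P) \<le> card D" using D card_mono by blast
  have "real (card P)^2 / real (card D) \<le> real (card P)^2 / real (card (?g`P))"
    using pos le by (intro divide_left_mono) auto
  also have "\<dots> \<le> real (card ?W)" using cs pos by (simp add: divide_le_eq mult.commute)
  also have "\<dots> \<le> real (add_energy S)" using \<open>card ?W \<le> add_energy S\<close> by simp
  finally show ?thesis .
qed

lemma fin_sets:
  assumes "finite A"
  shows "finite (sumset A A)" "finite (diffset A A)" "finite (AxA_plus_Delta A)" "finite (AxA_minus_Delta A)"
proof -
  have "sumset A A = (\<lambda>(a,b). a+b) ` (A\<times>A)" unfolding sumset_def by auto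
  then show "finite (sumset A A)" using assms by simp
  have "diffset A A = (\<lambda>(a,b). a-b) ` (A\<times>A)" unfolding diffset_def by auto
  then show "finite (diffset A A)" using assms by simp
  have "AxA_plus_Delta A = (\<lambda>(a,a1,a2). (a1+a,a2+a)) ` (A\<times>A\<times>A)" unfolding AxA_plus_Delta_def by (auto simp: image_def)
  then show "finite (AxA_plus_Delta A)" using assms by simp
  have "AxA_minus_Delta A = (\<lambda>(a,a1,a2). (a1-a,a2-a)) ` (A\<times>A\<times>A)" unfolding AxA_minus_Delta_def by (auto simp: image_def)
  then show "finite (AxA_minus_Delta A)" using assms by simp
qed

lemma E3_count:
  assumes "finite A"
  shows "card {(p,q,r). p\<in>A\<times>A \<and> q\<in>A\<times>A \<and> r\<in>A\<times>A \<and> (\<lambda>(x,y). x-y) p = (\<lambda>(x,y). x-y) q \<and> (\<lambda>(x,y). x-y) q = (\<lambda>(x,y). x-y) r} = E3 A"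
proof -
  let ?g = "\<lambda>(x,y). x-y :: 'a"
  have "card {(p,q,r). p\<in>A\<times>A \<and> q\<in>A\<times>A \<and> r\<in>A\<times>A \<and> ?g p = ?g q \<and> ?g q = ?g r} = (\<Sum>d\<in>?g`(A\<times>A). (card {x\<in>A\<times>A. ?g x = d})^3)"
    using assms by (intro triple_count) auto
  also have "?g`(A\<times>A) = diffset A A" unfolding diffset_def by auto
  also have "(\<Sum>d\<in>diffset A A. (card {x\<in>A\<times>A. ?g x = d})^3) = E3 A"
    unfolding E3_def r_diff_def
    by (intro sum.cong refl arg_cong[where f="\<lambda>n. n^3"] arg_cong[where f=card]) auto
  finally show ?thesis .
qed

lemma W_plus:
  fixes A :: "'a::ab_group_add set"
  assumes "finite A"
  shows "card {(x,y). x\<in>A\<times>A\<times>A \<and> y\<in>A\<times>A\<times>A \<and> (\<lambda>(a,a1,a2). (a1+a,a2+a)) x = (\<lambda>(a,a1,a2). (a1+a,a2+a)) y} = E3 A"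
proof -
  let ?g = "\<lambda>(x,y). x-y :: 'a"
  let ?W = "{(x,y). x\<in>A\<times>A\<times>A \<and> y\<in>A\<times>A\<times>A \<and> (\<lambda>(a,a1,a2). (a1+a,a2+a)) x = (\<lambda>(a,a1,a2). (a1+a,a2+a)) y}"
  let ?T = "{(p,q,r). p\<in>A\<times>A \<and> q\<in>A\<times>A \<and> r\<in>A\<times>A \<and> ?g p = ?g q \<and> ?g q = ?g r}"
  let ?psi = "\<lambda>((a::'a,a1::'a,a2::'a),(b::'a,b1::'a,b2::'a)). ((b,a),(a1,b1),(a2,b2))"
  have inj: "inj_on ?psi ?W" by (auto simp: inj_on_def)
  have img: "?psi ` ?W = ?T"
  proof
    show "?psi ` ?W \<subseteq> ?T"
    proof
      fix z assume "z \<in> ?psi ` ?W"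
      then obtain a a1 a2 b b1 b2 where z: "z = ((b,a),(a1,b1),(a2,b2))" and m: "a\<in>A" "a1\<in>A" "a2\<in>A" "b\<in>A" "b1\<in>A" "b2\<in>A"
        and e: "a1+a = b1+b" "a2+a = b2+b" by auto
      have "b - a = a1 - b1" "a1 - b1 = a2 - b2" using e by (metis add_diff_cancel_left' add_diff_eq diff_diff_eq2 diff_add_cancel add.commute)+
      then show "z \<in> ?T" using z m by auto
    qed
    show "?T \<subseteq> ?psi ` ?W"
    proof
      fix z assume "z \<in> ?T"
      then obtain a a1 a2 b b1 b2 where z: "z = ((b,a),(a1,b1),(a2,b2))" and m: "a\<in>A" "a1\<in>A" "a2\<in>A" "b\<in>A" "b1\<in>A" "b2\<in>A"
        and e: "b - a = a1 - b1" "a1 - b1 = a2 - b2" by auto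
      have e2: "a1+a = b1+b" "a2+a = b2+b" using e by (metis add_diff_cancel_left' add_diff_eq diff_diff_eq2 diff_add_cancel add.commute)+
      have "((a,a1,a2),(b,b1,b2)) \<in> ?W" using m e2 by auto
      then show "z \<in> ?psi ` ?W" unfolding z by (rule rev_image_eqI) simp
    qed
  qed
  have "card ?W = card ?T" using card_image[OF inj] img by simp
  also have "\<dots> = E3 A" by (rule E3_count[OF assms])
  finally show ?thesis .
qed


lemma W_minus:
  fixes A :: "'a::ab_group_add set"
  assumes "finite A"
  shows "card {(x,y). x\<in>A\<times>A\<times>A \<and> y\<in>A\<times>A\<times>A \<and> (\<lambda>(a,a1,a2). (a1-a,a2-a)) x = (\<lambda>(a,a1,a2). (a1-a,a2-a)) y} = E3 A"
proof -
  let ?g = "\<lambda>(x,y). x-y :: 'a"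
  let ?W = "{(x,y). x\<in>A\<times>A\<times>A \<and> y\<in>A\<times>A\<times>A \<and> (\<lambda>(a,a1,a2). (a1-a,a2-a)) x = (\<lambda>(a,a1,a2). (a1-a,a2-a)) y}"
  let ?T = "{(p,q,r). p\<in>A\<times>A \<and> q\<in>A\<times>A \<and> r\<in>A\<times>A \<and> ?g p = ?g q \<and> ?g q = ?g r}"
  let ?psi = "\<lambda>((a::'a,a1::'a,a2::'a),(b::'a,b1::'a,b2::'a)). ((a,b),(a1,b1),(a2,b2))"
  have inj: "inj_on ?psi ?W" by (auto simp: inj_on_def)
  have img: "?psi ` ?W = ?T"
  proof
    show "?psi ` ?W \<subseteq> ?T"
    proof
      fix z assume "z \<in> ?psi ` ?W"
      then obtain a a1 a2 b b1 b2 where z: "z = ((a,b),(a1,b1),(a2,b2))" and m: "a\<in>A" "a1\<in>A" "a2\<in>A" "b\<in>A" "b1\<in>A" "b2\<in>A"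
        and e: "a1-a = b1-b" "a2-a = b2-b" by auto
      have "a - b = a1 - b1" "a1 - b1 = a2 - b2" using e by (metis diff_eq_diff_eq diff_diff_eq2 add.commute eq_diff_eq)+
      then show "z \<in> ?T" using z m by auto
    qed
    show "?T \<subseteq> ?psi ` ?W"
    proof
      fix z assume "z \<in> ?T"
      then obtain a a1 a2 b b1 b2 where z: "z = ((a,b),(a1,b1),(a2,b2))" and m: "a\<in>A" "a1\<in>A" "a2\<in>A" "b\<in>A" "b1\<in>A" "b2\<in>A"
        and e: "a - b = a1 - b1" "a1 - b1 = a2 - b2" by auto
      have e2: "a1-a = b1-b" "a2-a = b2-b" using e by (metis diff_eq_diff_eq diff_diff_eq2 add.commute eq_diff_eq)+
      have "((a,a1,a2),(b,b1,b2)) \<in> ?W" using m e2 by auto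
      then show "z \<in> ?psi ` ?W" unfolding z by (rule rev_image_eqI) simp
    qed
  qed
  have "card ?W = card ?T" using card_image[OF inj] img by simp
  also have "\<dots> = E3 A" by (rule E3_count[OF assms])
  finally show ?thesis .
qed

lemma plus_bounds:
  fixes A :: "'a::ab_group_add set"
  assumes fA: "finite A"
  shows "card A * card (diffset A A) \<le> card (AxA_plus_Delta A)"
    "card A * card (sumset A A) \<le> card (AxA_plus_Delta A)"
    "real (card A)^6 \<le> real (card (AxA_plus_Delta A)) * real (E3 A)"
proof -
  let ?P = "AxA_plus_Delta A"
  have fP: "finite ?P" using fin_sets[OF fA] by simp
  define rep where "rep d = (SOME p. p\<in>A\<times>A \<and> fst p - snd p = d)" for d
  have rep: "rep d \<in> A\<times>A \<and> fst (rep d) - snd (rep d) = d" if "d \<in> diffset A A" for d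
  proof -
    have "\<exists>p. p\<in>A\<times>A \<and> fst p - snd p = d" using that unfolding diffset_def by auto
    then show ?thesis unfolding rep_def by (rule someI_ex)
  qed
  have "card (diffset A A \<times> A) \<le> card ?P"
  proof (rule card_inj_on_le[where f="\<lambda>(d,a). (fst (rep d) + a, snd (rep d) + a)"])
    show "inj_on (\<lambda>(d,a). (fst (rep d) + a, snd (rep d) + a)) (diffset A A \<times> A)"
    proof (rule inj_onI, clarsimp)
      fix d a d' a'
      assume d: "d \<in> diffset A A" "d' \<in> diffset A A" and e: "fst (rep d) + a = fst (rep d') + a'" "snd (rep d) + a = snd (rep d') + a'"
      have "d = (fst (rep d) + a) - (snd (rep d) + a)" using rep[OF d(1)] by simp
      also have "\<dots> = (fst (rep d') + a') - (snd (rep d') + a')" using e by simp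
      also have "\<dots> = d'" using rep[OF d(2)] by simp
      finally have "d = d'" .
      then show "d = d' \<and> a = a'" using e by simp
    qed
    show "(\<lambda>(d,a). (fst (rep d) + a, snd (rep d) + a)) ` (diffset A A \<times> A) \<subseteq> ?P"
      using rep unfolding AxA_plus_Delta_def by (auto simp: mem_Times_iff)
  qed (rule fP)
  then show "card A * card (diffset A A) \<le> card ?P" by (simp add: card_cartesian_product mult.commute)
  define rs where "rs s = (SOME p. p\<in>A\<times>A \<and> fst p + snd p = s)" for s
  have rs: "rs s \<in> A\<times>A \<and> fst (rs s) + snd (rs s) = s" if "s \<in> sumset A A" for s
  proof -
    have "\<exists>p. p\<in>A\<times>A \<and> fst p + snd p = s" using that unfolding sumset_def by auto
    then show ?thesis unfolding rs_def by (rule someI_ex)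
  qed
  have "card (sumset A A \<times> A) \<le> card ?P"
  proof (rule card_inj_on_le[where f="\<lambda>(s,b). (s, b + snd (rs s))"])
    show "inj_on (\<lambda>(s,b). (s, b + snd (rs s))) (sumset A A \<times> A)"
      by (rule inj_onI) auto
    show "(\<lambda>(s,b). (s, b + snd (rs s))) ` (sumset A A \<times> A) \<subseteq> ?P"
    proof clarsimp
      fix s b assume s: "s \<in> sumset A A" and b: "b \<in> A"
      obtain x y where xy: "rs s = (x,y)" by force
      have m: "x \<in> A" "y \<in> A" "s = x + y" using rs[OF s] xy by auto
      show "(s, b + snd (rs s)) \<in> ?P" unfolding AxA_plus_Delta_def xy
        using m b by (intro CollectI exI[of _ y] exI[of _ x] exI[of _ b]) simp
    qed
  qed (rule fP)
  then show "card A * card (sumset A A) \<le> card ?P" by (simp add: card_cartesian_product mult.commute)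
  let ?phi = "\<lambda>(a::'a,a1::'a,a2::'a). (a1+a,a2+a)"
  have img: "?phi ` (A\<times>A\<times>A) = ?P" unfolding AxA_plus_Delta_def by (auto simp: image_def)
  have "real (card (A\<times>A\<times>A))^2 \<le> real (card (?phi ` (A\<times>A\<times>A))) * real (card {(x,y). x\<in>A\<times>A\<times>A \<and> y\<in>A\<times>A\<times>A \<and> ?phi x = ?phi y})"
    using fA by (intro cs_fib) auto
  then show "real (card A)^6 \<le> real (card ?P) * real (E3 A)"
    using img W_plus[OF fA] by (simp add: card_cartesian_product power_mult_distrib flip: power_mult)
qed


lemma minus_bounds:
  fixes A :: "'a::ab_group_add set"
  assumes fA: "finite A"
  shows "card A * card (diffset A A) \<le> card (AxA_minus_Delta A)"
    "real (card A)^6 \<le> real (card (AxA_minus_Delta A)) * real (E3 A)"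
proof -
  let ?P = "AxA_minus_Delta A"
  have fP: "finite ?P" using fin_sets[OF fA] by simp
  define rep where "rep d = (SOME p. p\<in>A\<times>A \<and> fst p - snd p = d)" for d
  have rep: "rep d \<in> A\<times>A \<and> fst (rep d) - snd (rep d) = d" if "d \<in> diffset A A" for d
  proof -
    have "\<exists>p. p\<in>A\<times>A \<and> fst p - snd p = d" using that unfolding diffset_def by auto
    then show ?thesis unfolding rep_def by (rule someI_ex)
  qed
  have "card (diffset A A \<times> A) \<le> card ?P"
  proof (rule card_inj_on_le[where f="\<lambda>(d,a). (fst (rep d) - a, snd (rep d) - a)"])
    show "inj_on (\<lambda>(d,a). (fst (rep d) - a, snd (rep d) - a)) (diffset A A \<times> A)"
    proof (rule inj_onI, clarsimp)
      fix d a d' a'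
      assume d: "d \<in> diffset A A" "d' \<in> diffset A A" and e: "fst (rep d) - a = fst (rep d') - a'" "snd (rep d) - a = snd (rep d') - a'"
      have "d = (fst (rep d) - a) - (snd (rep d) - a)" using rep[OF d(1)] by simp
      also have "\<dots> = (fst (rep d') - a') - (snd (rep d') - a')" using e by simp
      also have "\<dots> = d'" using rep[OF d(2)] by simp
      finally have "d = d'" .
      then show "d = d' \<and> a = a'" using e by simp
    qed
    show "(\<lambda>(d,a). (fst (rep d) - a, snd (rep d) - a)) ` (diffset A A \<times> A) \<subseteq> ?P"
      using rep unfolding AxA_minus_Delta_def by (auto simp: mem_Times_iff)
  qed (rule fP)
  then show "card A * card (diffset A A) \<le> card ?P" by (simp add: card_cartesian_product mult.commute)
  let ?phi = "\<lambda>(a::'a,a1::'a,a2::'a). (a1-a,a2-a)"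
  have img: "?phi ` (A\<times>A\<times>A) = ?P" unfolding AxA_minus_Delta_def by (auto simp: image_def)
  have "real (card (A\<times>A\<times>A))^2 \<le> real (card (?phi ` (A\<times>A\<times>A))) * real (card {(x,y). x\<in>A\<times>A\<times>A \<and> y\<in>A\<times>A\<times>A \<and> ?phi x = ?phi y})"
    using fA by (intro cs_fib) auto
  then show "real (card A)^6 \<le> real (card ?P) * real (E3 A)"
    using img W_minus[OF fA] by (simp add: card_cartesian_product power_mult_distrib flip: power_mult)
qed

lemma plus_sub: "AxA_plus_Delta A \<subseteq> sumset A A \<times> sumset A A" "(\<lambda>(s,t). s - t) ` AxA_plus_Delta A \<subseteq> diffset A A"
  unfolding AxA_plus_Delta_def sumset_def diffset_def by auto blast+

lemma minus_sub: "AxA_minus_Delta A \<subseteq> diffset A A \<times> diffset A A" "(\<lambda>(s,t). s - t) ` AxA_minus_Delta A \<subseteq> diffset A A"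
  unfolding AxA_minus_Delta_def diffset_def by auto blast+

lemma arith1:
  fixes P D a :: real
  assumes "a * D \<le> P" "a \<ge> 0" "D > 0"
  shows "P^2/D \<ge> a^2 * D"
proof -
  have "(a*D)^2 \<le> P^2" using assms by (intro power_mono) auto
  then show ?thesis using assms by (simp add: le_divide_eq power2_eq_square algebra_simps)
qed

lemma arith2:
  fixes P D a S :: real
  assumes "a * D \<le> P" "a * S \<le> P" "a \<ge> 0" "D > 0" "S \<ge> 0"
  shows "P^2/D \<ge> a^2 * S"
proof -
  have "0 \<le> a*S" using assms by simp
  moreover have "0 \<le> P" using \<open>0 \<le> a*S\<close> assms(2) by linarith
  ultimately have "(a*D)*(a*S) \<le> P*P" using assms by (intro mult_mono) auto
  then show ?thesis using assms by (simp add: le_divide_eq power2_eq_square algebra_simps)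
qed

lemma arith3:
  fixes P D a E E3 :: real
  assumes "E \<ge> P^2/D" "a^6 \<le> P * E3" "a \<ge> 0" "D > 0" "E3 \<ge> 0" "P \<ge> 0"
  shows "E \<ge> a^12 / (E3^2 * D)"
proof (cases "E3 = 0")
  case True
  then show ?thesis using assms by simp (meson divide_nonneg_pos order.trans zero_le_power2)
next
  case False
  then have "E3 > 0" using assms by simp
  have "a^6 / E3 \<le> P" using assms \<open>E3 > 0\<close> by (simp add: divide_le_eq)
  moreover have "a^6 / E3 \<ge> 0" using assms by simp
  ultimately have "(a^6/E3)^2 \<le> P^2" by (intro power_mono) auto
  then have "a^12 / E3^2 \<le> P^2" by (simp add: power_divide flip: power_mult)
  then have "a^12 / E3^2 / D \<le> P^2 / D" using assms by (intro divide_right_mono) auto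
  then show ?thesis using assms by (simp add: divide_divide_eq_left)
qed

theorem corollary5p6:
  fixes A :: "'a::ab_group_add set"
  assumes "finite A"
  shows "(real (add_energy (sumset A A))
            \<ge> real (card (AxA_plus_Delta A)) ^ 2 / real (card (diffset A A))
          \<and> real (card (AxA_plus_Delta A)) ^ 2 / real (card (diffset A A))
            \<ge> real (card A) ^ 2 * max (real (card (diffset A A))) (real (card (sumset A A))))
       \<and> (real (add_energy (diffset A A))
            \<ge> real (card (AxA_minus_Delta A)) ^ 2 / real (card (diffset A A))
          \<and> real (card (AxA_minus_Delta A)) ^ 2 / real (card (diffset A A))
            \<ge> real (card A) ^ 2 * real (card (diffset A A)))
       \<and> (real (add_energy (sumset A A))
            \<ge> real (card A) ^ 12 / (real (E3 A) ^ 2 * real (card (diffset A A)))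
          \<and> real (add_energy (diffset A A))
            \<ge> real (card A) ^ 12 / (real (E3 A) ^ 2 * real (card (diffset A A))))"
proof (cases "A = {}")
  case True
  have "sumset A A = {}" "diffset A A = {}" "AxA_plus_Delta A = {}" "AxA_minus_Delta A = {}"
    unfolding sumset_def diffset_def AxA_plus_Delta_def AxA_minus_Delta_def using True by auto
  then show ?thesis using True by simp
next
  case False
  note fs = fin_sets[OF assms]
  have Dpos: "real (card (diffset A A)) > 0"
    using False fs(2) unfolding diffset_def by (auto simp: card_gt_0_iff)
  have E1: "real (add_energy (sumset A A)) \<ge> real (card (AxA_plus_Delta A)) ^ 2 / real (card (diffset A A))"
    by (rule energy_bound[OF fs(1) plus_sub(1) fs(2) plus_sub(2)])
  have E2: "real (add_energy (diffset A A)) \<ge> real (card (AxA_minus_Delta A)) ^ 2 / real (card (diffset A A))"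
    by (rule energy_bound[OF fs(2) minus_sub(1) fs(2) minus_sub(2)])
  note pb = plus_bounds[OF assms] and mb = minus_bounds[OF assms]
  have pb1: "real (card A) * real (card (diffset A A)) \<le> real (card (AxA_plus_Delta A))"
    using pb(1) by (metis of_nat_le_iff of_nat_mult)
  have pb2: "real (card A) * real (card (sumset A A)) \<le> real (card (AxA_plus_Delta A))"
    using pb(2) by (metis of_nat_le_iff of_nat_mult)
  have mb1: "real (card A) * real (card (diffset A A)) \<le> real (card (AxA_minus_Delta A))"
    using mb(1) by (metis of_nat_le_iff of_nat_mult)
  have a1: "real (card (AxA_plus_Delta A)) ^ 2 / real (card (diffset A A))
            \<ge> real (card A) ^ 2 * max (real (card (diffset A A))) (real (card (sumset A A)))"
    using arith1[OF pb1 _ Dpos] arith2[OF pb1 pb2 _ Dpos] by (simp add: max_def)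
  have a2: "real (card (AxA_minus_Delta A)) ^ 2 / real (card (diffset A A))
            \<ge> real (card A) ^ 2 * real (card (diffset A A))"
    using arith1[OF mb1 _ Dpos] by simp
  have a3: "real (add_energy (sumset A A)) \<ge> real (card A) ^ 12 / (real (E3 A) ^ 2 * real (card (diffset A A)))"
    by (rule arith3[OF E1 pb(3) _ Dpos]) auto
  have a4: "real (add_energy (diffset A A)) \<ge> real (card A) ^ 12 / (real (E3 A) ^ 2 * real (card (diffset A A)))"
    by (rule arith3[OF E2 mb(2) _ Dpos]) auto
  show ?thesis using E1 E2 a1 a2 a3 a4 by blast
qed

end
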